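(* The set $\mathbb Q$ of rational numbers, canonically arranged as below, has size sequence $$\sigma(\mathbb Q)=2\,\sigma(\mathbb I)\cdot(\alpha+1)+1,\quad\text{i.e. } \sigma_n(\mathbb Q)=2(n+1)\Phi(n)+1,$$ where $\Phi(n)=\sum_{i=1}^n\varphi(i)$ with $\varphi$ Euler's totient function; moreover $\sigma(\mathbb Q)\approx_\mathcal F\alpha^3$, and more precisely $$\tfrac{3}{5}(\alpha^3+\alpha^2)<_\mathcal F\sigma(\mathbb Q)<_\mathcal F\alpha^3-\alpha.$$
   Context: $\mathbb N=\{1,2,\dots\}$. Positive rationals are represented by triples $(p,k,m)$, $p\in\mathbb N_0$, $k,m\in\mathbb N$, $\gcd(k,m)=1$, $k\le m$, standing for $p+k/m$; the triple lies in the $n$-th component of $\mathbb Q^+$ where $n=\max\{\ell(p),m\}$, with $\ell(0)=1$ and $\ell(p)=p$ for $p\ge1$ (this is the product arrangement of $\mathbb N_0\times\mathbb I$, $\mathbb I=(0,1]\cap\mathbb Q$). Negative rationals $\mathbb Q^-$ are arranged so that $-x$ lies in the same component as $x\in\mathbb Q^+$, and $0$ lies in the first component; $\mathbb Q=\mathbb Q^+\cup\mathbb Q^-\cup\{0\}$ is arranged by componentwise union. The size sequence is $\sigma(A)=(\sigma_n(A))_n$ with $\sigma_n(A)$ the number of elements of $A$ in components $1,\dots,n$. $\alpha=(n)_n$; operations on sequences are componentwise; constants are identified with constant sequences. $(a_n)<_\mathcal F(b_n)$ iff $a_n<b_n$ for all sufficiently large $n$; $(a_n)\approx_\mathcal F(b_n)$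 iff some $k\in\mathbb N$ has $ka_n\ge b_n$ for all large $n$ and some $k$ has $kb_n\ge a_n$ for all large $n$. *)

theory Defs
  imports Complex_Main "HOL-Number_Theory.Totient"
begin

definition ell :: "nat \<Rightarrow> nat" where
  "ell p = (if p = 0 then 1 else p)"

text \<open>Triple representation (p,k,m) of a positive rational x = p + k/m with
  gcd k m = 1, 1 \<le> k \<le> m: p is the integer part with k/m \<in> (0,1].\<close>
definition triple_of :: "rat \<Rightarrow> nat \<times> nat \<times> nat" where
  "triple_of x = (let p = \<lceil>x\<rceil> - 1; (k, m) = quotient_of (x - of_int p)
                  in (nat p, nat k, nat m))"

text \<open>Component of a positive rational in the product arrangement of N0 \<times> I.\<close>
definition comp_pos :: "rat \<Rightarrow> nat" where
  "comp_pos x = (case triple_of x of (p, k, m) \<Rightarrow> max (ell p) m)"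

definition comp_Q :: "rat \<Rightarrow> nat" where
  "comp_Q x = (if x = 0 then 1 else comp_pos \<bar>x\<bar>)"

definition sigma_Q :: "nat \<Rightarrow> nat" where
  "sigma_Q n = card {x :: rat. 1 \<le> comp_Q x \<and> comp_Q x \<le> n}"

definition sigma_I :: "nat \<Rightarrow> nat" where
  "sigma_I n = card {x :: rat. 0 < x \<and> x \<le> 1 \<and> nat (snd (quotient_of x)) \<le> n}"

definition Phi :: "nat \<Rightarrow> nat" where
  "Phi n = (\<Sum>i=1..n. totient i)"

definition F_less :: "(nat \<Rightarrow> real) \<Rightarrow> (nat \<Rightarrow> real) \<Rightarrow> bool" where
  "F_less a b \<longleftrightarrow> (\<forall>\<^sub>F n in sequentially. a n < b n)"

definition F_approx :: "(nat \<Rightarrow> real) \<Rightarrow> (nat \<Rightarrow> real) \<Rightarrow> bool" where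
  "F_approx a b \<longleftrightarrow>
     (\<exists>k::nat. k \<ge> 1 \<and> (\<forall>\<^sub>F n in sequentially. real k * a n \<ge> b n)) \<and>
     (\<exists>k::nat. k \<ge> 1 \<and> (\<forall>\<^sub>F n in sequentially. real k * b n \<ge> a n))"

end

theory Submission
  imports Defs "HOL-Computational_Algebra.Squarefree" "HOL-Analysis.Analysis" "HOL-Real_Asymp.Real_Asymp"
begin


definition mu :: "nat \<Rightarrow> real" where
  "mu n = (if squarefree n then (-1) ^ card (prime_factors n) else 0)"

lemma abs_mu_le: "\<bar>mu n\<bar> \<le> 1"
  by (simp add: mu_def)

lemma mu_mult_prime:
  assumes p: "prime p" and np: "\<not> p dvd e" and e: "e > 0"
  shows "mu (p * e) = - mu e"
proof -
  have cop: "coprime p e" using p np by (simp add: prime_imp_coprime)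
  have sq: "squarefree (p * e) \<longleftrightarrow> squarefree e"
    using squarefree_multD(2)[of p e] squarefree_mult_coprime[OF cop squarefree_prime[OF p]] by blast
  have pf: "prime_factors (p * e) = insert p (prime_factors e)"
    using p e by (simp add: prime_factors_product prime_prime_factors)
  have "p \<notin> prime_factors e" using np by auto
  then have "card (prime_factors (p * e)) = Suc (card (prime_factors e))"
    using pf by simp
  then show ?thesis by (simp add: mu_def sq)
qed

lemma mu_sum:
  assumes n: "n > 0"
  shows "(\<Sum>d | d dvd n. mu d) = (if n = 1 then 1 else 0)"
proof (cases "n = 1")
  case True
  then have "{d. d dvd n} = {1}" by auto
  then show ?thesis using True by (simp add: mu_def)
next
  case False
  then obtain p where p: "prime p" "p dvd n" using n
    by (metis nat_neq_iff prime_factor_nat less_one)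
  define D where "D = {d. d dvd n}"
  define A where "A = {d\<in>D. \<not> p dvd d}"
  define B where "B = {d\<in>D. p dvd d}"
  have finD: "finite D" using n by (simp add: D_def)
  have finA: "finite A" "finite B" using finD by (auto simp: A_def B_def)
  have "sum mu D = sum mu A + sum mu B"
  proof -
    have "D = A \<union> B" "A \<inter> B = {}" by (auto simp: A_def B_def)
    then show ?thesis using finA by (simp add: sum.union_disjoint)
  qed
  moreover have "sum mu B = - sum mu A"
  proof -
    define B' where "B' = (\<lambda>e. p * e) ` A"
    have pos: "p > 0" using p by (simp add: prime_gt_0_nat)
    have sub: "B' \<subseteq> B"
    proof
      fix d assume "d \<in> B'"
      then obtain e where e: "e \<in> A" "d = p * e" by (auto simp: B'_def)
      have "coprime p e" using e p by (simp add: A_def prime_imp_coprime)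
      then have "p * e dvd n" using e p by (auto simp: A_def D_def intro: divides_mult)
      then show "d \<in> B" using e by (simp add: B_def D_def)
    qed
    have zero: "mu d = 0" if "d \<in> B - B'" for d
    proof -
      from that have d: "d dvd n" "p dvd d" "d \<notin> B'" by (auto simp: B_def D_def)
      then obtain e where e: "d = p * e" by auto
      have "e dvd n" using d e by (metis dvd_mult_right)
      have "p dvd e"
      proof (rule ccontr)
        assume "\<not> p dvd e"
        then have "e \<in> A" using \<open>e dvd n\<close> by (simp add: A_def D_def)
        then have "d \<in> B'" using e unfolding B'_def by blast
        then show False using d by simp
      qed
      then have "p ^ 2 dvd d" using e by (auto simp: power2_eq_square)
      then have "\<not> squarefree d" using p
        by (metis not_prime_unit squarefreeD)
      then show ?thesis by (simp add: mu_def)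
    qed
    have "sum mu B = sum mu B'"
      by (rule sum.mono_neutral_right[OF finA(2) sub]) (use zero in auto)
    also have "\<dots> = sum (\<lambda>e. mu (p * e)) A"
      unfolding B'_def using pos by (subst sum.reindex) (auto simp: inj_on_def)
    also have "\<dots> = sum (\<lambda>e. - mu e) A"
    proof (rule sum.cong)
      fix e assume "e \<in> A"
      then have "\<not> p dvd e" "e > 0" using n by (auto simp: A_def D_def intro: Nat.gr0I)
      then show "mu (p * e) = - mu e" using mu_mult_prime[OF p(1)] by blast
    qed simp
    finally show ?thesis by (simp add: sum_negf)
  qed
  ultimately show ?thesis using False by (simp add: D_def)
qed



lemma sum_divisors_reindex:
  fixes f :: "nat \<Rightarrow> nat \<Rightarrow> real"
  shows "(\<Sum>m\<in>{1..n}. \<Sum>d | d dvd m. f d (m div d)) = (\<Sum>d\<in>{1..n}. \<Sum>a\<in>{1..n div d}. f d a)"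
proof -
  have "(\<Sum>m\<in>{1..n}. \<Sum>d | d dvd m. f d (m div d)) = (\<Sum>(m,d)\<in>Sigma {1..n} (\<lambda>m. {d. d dvd m}). f d (m div d))"
    by (rule sum.Sigma) auto
  also have "\<dots> = (\<Sum>(d,a)\<in>Sigma {1..n} (\<lambda>d. {1..n div d}). f d a)"
  proof (rule sum.reindex_bij_witness[where i = "\<lambda>(d,a). (d*a, d)" and j = "\<lambda>(m,d). (d, m div d)"])
    fix x assume "x \<in> Sigma {1..n} (\<lambda>m. {d. d dvd m})"
    then obtain m d where x: "x = (m,d)" "1 \<le> m" "m \<le> n" "d dvd m" by auto
    then show "(case case x of (m, d) \<Rightarrow> (d, m div d) of (d, a) \<Rightarrow> (d * a, d)) = x" by auto
  next
    fix x assume "x \<in> Sigma {1..n} (\<lambda>m. {d. d dvd m})"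
    then obtain m d where x: "x = (m,d)" "1 \<le> m" "m \<le> n" "d dvd m" by auto
    then have d: "d > 0" "d \<le> m" by (auto intro: Nat.gr0I dvd_imp_le)
    have "m div d \<le> n div d" using x by (simp add: div_le_mono)
    moreover have "m div d \<ge> 1" using d x by (metis div_greater_zero_iff One_nat_def Suc_leI)
    ultimately show "(case x of (m, d) \<Rightarrow> (d, m div d)) \<in> Sigma {1..n} (\<lambda>d. {1..n div d})"
      using x d by auto
  next
    fix y assume "y \<in> Sigma {1..n} (\<lambda>d. {1..n div d})"
    then obtain d a where y: "y = (d,a)" "1 \<le> d" "d \<le> n" "1 \<le> a" "a \<le> n div d" by auto
    then show "(case case y of (d, a) \<Rightarrow> (d * a, d) of (m, d) \<Rightarrow> (d, m div d)) = y" by auto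
  next
    fix y assume "y \<in> Sigma {1..n} (\<lambda>d. {1..n div d})"
    then obtain d a where y: "y = (d,a)" "1 \<le> d" "d \<le> n" "1 \<le> a" "a \<le> n div d" by auto
    have "d * a \<le> d * (n div d)" using y by simp
    also have "\<dots> \<le> n" by simp
    finally have "d * a \<le> n" .
    then show "(case y of (d, a) \<Rightarrow> (d * a, d)) \<in> Sigma {1..n} (\<lambda>m. {d. d dvd m})" using y by auto
  next
    fix x assume "x \<in> Sigma {1..n} (\<lambda>m. {d. d dvd m})"
    then obtain m d where x: "x = (m,d)" "1 \<le> m" "m \<le> n" "d dvd m" by auto
    then show "(case case x of (m, d) \<Rightarrow> (d, m div d) of (d, a) \<Rightarrow> f d a) = (case x of (m, d) \<Rightarrow> f d (m div d))" by auto
  qed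
  also have "\<dots> = (\<Sum>d\<in>{1..n}. \<Sum>a\<in>{1..n div d}. f d a)"
    by (rule sum.Sigma[symmetric]) auto
  finally show ?thesis .
qed



lemma div_div_dvd:
  fixes m d :: nat
  assumes "d dvd m" "m > 0"
  shows "m div (m div d) = d" "m div d dvd m"
proof -
  obtain k where k: "m = d * k" using assms by (auto elim: dvdE)
  then have "d > 0" "k > 0" using assms by auto
  then show "m div (m div d) = d" "m div d dvd m" using k by auto
qed

lemma sum_divisors_flip:
  fixes m :: nat
  assumes "m > 0"
  shows "(\<Sum>d | d dvd m. g (m div d)) = (\<Sum>d | d dvd m. g d)"
  by (rule sum.reindex_bij_witness[where i = "\<lambda>d. m div d" and j = "\<lambda>d. m div d"])
     (use assms in \<open>auto simp: div_div_dvd\<close>)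

lemma sum_delta_one:
  fixes g :: "nat \<Rightarrow> real"
  assumes "n \<ge> 1"
  shows "(\<Sum>m\<in>{1..n}. g m * (\<Sum>d | d dvd m. mu d)) = g 1"
proof -
  have "(\<Sum>m\<in>{1..n}. g m * (\<Sum>d | d dvd m. mu d)) = (\<Sum>m\<in>{1..n}. if m = 1 then g 1 else 0)"
    by (rule sum.cong) (auto simp: mu_sum)
  also have "\<dots> = g 1" using assms by simp
  finally show ?thesis .
qed

definition TT :: "nat \<Rightarrow> real" where "TT q = (\<Sum>m\<in>{1..q}. real m)"
definition ZZ :: "nat \<Rightarrow> real" where "ZZ q = (\<Sum>a\<in>{1..q}. 1 / (real a)^2)"

lemma TT_Phi: "TT n = (\<Sum>d\<in>{1..n}. real (Phi (n div d)))"
proof -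
  have "TT n = (\<Sum>m\<in>{1..n}. \<Sum>d | d dvd m. real (totient (m div d)))"
    unfolding TT_def
  proof (rule sum.cong)
    fix m assume "m \<in> {1..n}"
    then have "(\<Sum>d | d dvd m. real (totient (m div d))) = (\<Sum>d | d dvd m. real (totient d))"
      by (intro sum_divisors_flip) auto
    also have "\<dots> = real m" using totient_divisor_sum[of m] by (metis of_nat_sum)
    finally show "real m = (\<Sum>d | d dvd m. real (totient (m div d)))" by simp
  qed simp
  also have "\<dots> = (\<Sum>d\<in>{1..n}. \<Sum>a\<in>{1..n div d}. real (totient a))"
    by (rule sum_divisors_reindex)
  also have "\<dots> = (\<Sum>d\<in>{1..n}. real (Phi (n div d)))"
    by (simp add: Phi_def)
  finally show ?thesis .
qed

lemma Phi_mu: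
  assumes "n \<ge> 1"
  shows "real (Phi n) = (\<Sum>d\<in>{1..n}. mu d * TT (n div d))"
proof -
  have "(\<Sum>d\<in>{1..n}. mu d * TT (n div d)) = (\<Sum>d\<in>{1..n}. \<Sum>e\<in>{1..n div d}. mu d * real (Phi (n div (d * e))))"
    by (simp add: TT_Phi sum_distrib_left div_mult2_eq)
  also have "\<dots> = (\<Sum>m\<in>{1..n}. \<Sum>d | d dvd m. mu d * real (Phi (n div (d * (m div d)))))"
    by (rule sum_divisors_reindex[symmetric])
  also have "\<dots> = (\<Sum>m\<in>{1..n}. real (Phi (n div m)) * (\<Sum>d | d dvd m. mu d))"
    by (rule sum.cong) (auto simp: sum_distrib_left mult.commute intro!: sum.cong)
  also have "\<dots> = real (Phi n)" using sum_delta_one[OF assms] by simp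
  finally show ?thesis by simp
qed

lemma one_mu_ZZ:
  assumes "n \<ge> 1"
  shows "(\<Sum>d\<in>{1..n}. mu d / (real d)^2 * ZZ (n div d)) = 1"
proof -
  have "(\<Sum>d\<in>{1..n}. mu d / (real d)^2 * ZZ (n div d)) = (\<Sum>d\<in>{1..n}. \<Sum>a\<in>{1..n div d}. mu d / (real (d * a))^2)"
    by (simp add: ZZ_def sum_distrib_left power_mult_distrib)
  also have "\<dots> = (\<Sum>m\<in>{1..n}. \<Sum>d | d dvd m. mu d / (real (d * (m div d)))^2)"
    by (rule sum_divisors_reindex[symmetric])
  also have "\<dots> = (\<Sum>m\<in>{1..n}. 1 / (real m)^2 * (\<Sum>d | d dvd m. mu d))"
    by (rule sum.cong) (auto simp: sum_distrib_left intro!: sum.cong)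
  also have "\<dots> = 1" using sum_delta_one[OF assms, of "\<lambda>m. 1 / (real m)^2"] by simp
  finally show ?thesis .
qed



lemma TT_closed: "TT q = real q * (real q + 1) / 2"
  by (induction q) (auto simp: TT_def algebra_simps add_divide_distrib)

lemma div_real_bounds:
  fixes n d :: nat
  assumes "d > 0"
  shows "real (n div d) \<le> real n / real d" "real (n div d) > real n / real d - 1"
proof -
  have eq: "real n = real d * real (n div d) + real (n mod d)"
    by (metis div_mult_mod_eq of_nat_add of_nat_mult mult.commute)
  have "n mod d < d" using assms by simp
  then have m: "real (n mod d) < real d" "real (n mod d) \<ge> 0" by auto
  have dpos: "real d > 0" using assms by simp
  show "real (n div d) \<le> real n / real d"
    using eq m dpos by (simp add: field_simps)
  show "real (n div d) > real n / real d - 1"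
    using eq m dpos by (simp add: field_simps)
qed

lemma TT_approx:
  fixes n d :: nat
  assumes "d > 0"
  shows "\<bar>TT (n div d) - (real n / real d)^2 / 2\<bar> \<le> real n / real d / 2"
proof -
  define x where "x = real n / real d"
  define q where "q = real (n div d)"
  have q1: "q \<le> x" "q > x - 1" "q \<ge> 0" "x \<ge> 0"
    using div_real_bounds[OF assms, of n] by (auto simp: x_def q_def)
  have up: "q * (q + 1) \<le> x * (x + 1)" using q1 by (intro mult_mono) auto
  have lo: "(x - 1) * x \<le> q * (q + 1)"
  proof (cases "x \<ge> 1")
    case True then show ?thesis using q1 by (intro mult_mono) auto
  next
    case False then have "(x - 1) * x \<le> 0" using q1 by (simp add: mult_nonpos_nonneg)
    then show ?thesis using q1 by (smt (verit) mult_nonneg_nonneg)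
  qed
  have "TT (n div d) = q * (q + 1) / 2" by (simp add: TT_closed q_def)
  then show ?thesis using up lo unfolding x_def[symmetric]
    by (simp add: abs_le_iff field_simps power2_eq_square)
qed

definition zeta2 :: real where "zeta2 = pi^2 / 6"

lemma ZZ_alt: "ZZ q = (\<Sum>k<q. 1 / real ((k + 1)^2))"
  by (induction q) (auto simp: ZZ_def)

lemma ZZ_le: "ZZ q \<le> zeta2"
proof -
  have "(\<Sum>k<q. 1 / real ((k + 1)^2)) \<le> (\<Sum>k. 1 / real ((k + 1)^2))"
    using inverse_squares_sums by (intro sum_le_suminf) (auto simp: sums_iff)
  then show ?thesis using inverse_squares_sums by (simp add: ZZ_alt zeta2_def sums_iff)
qed

lemma ZZ_tail:
  assumes "q \<ge> 1"
  shows "zeta2 - ZZ q \<le> 1 / real q"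
proof -
  have fin: "ZZ M \<le> ZZ q + 1 / real q - 1 / real M" if "M \<ge> q" for M
    using that
  proof (induction M rule: dec_induct)
    case base then show ?case by simp
  next
    case (step M)
    have M: "real M \<ge> 1" using step assms by simp
    have a: "real M * real (M + 1) \<le> (real (M + 1))^2" by (simp add: power2_eq_square)
    have "1 / (real (M + 1))^2 \<le> 1 / (real M * real (M + 1))"
      using a M by (intro divide_left_mono) auto
    also have "1 / (real M * real (M + 1)) = 1 / real M - 1 / real (M + 1)"
      using M by (simp add: field_simps)
    finally have "1 / (real (M + 1))^2 \<le> 1 / real M - 1 / real (M + 1)" .
    moreover have "ZZ (Suc M) = ZZ M + 1 / (real (M + 1))^2" by (simp add: ZZ_def)
    ultimately show ?case using step.IH by simp
  qed
  have "(\<lambda>M. ZZ M) \<longlonglongrightarrow> zeta2"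
    using inverse_squares_sums unfolding sums_def ZZ_alt zeta2_def by simp
  moreover have "\<exists>N. \<forall>M\<ge>N. ZZ M \<le> ZZ q + 1 / real q"
  proof (intro exI allI impI)
    fix M assume "M \<ge> q"
    moreover have "1 / real M \<ge> 0" by simp
    ultimately show "ZZ M \<le> ZZ q + 1 / real q" using fin[of M] by linarith
  qed
  ultimately have "zeta2 \<le> ZZ q + 1 / real q" by (rule LIMSEQ_le_const2)
  then show ?thesis by simp
qed



definition HH :: "nat \<Rightarrow> real" where "HH n = (\<Sum>d\<in>{1..n}. 1 / real d)"
definition SS :: "nat \<Rightarrow> real" where "SS n = (\<Sum>d\<in>{1..n}. mu d / (real d)^2)"

lemma HH_nonneg: "HH n \<ge> 0" by (simp add: HH_def sum_nonneg)

lemma Phi_ge_S: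
  assumes "n \<ge> 1"
  shows "real (Phi n) \<ge> (real n)^2 / 2 * SS n - real n / 2 * HH n"
proof -
  have "(\<Sum>d\<in>{1..n}. (real n)^2 / 2 * (mu d / (real d)^2) - real n / 2 * (1 / real d))
        \<le> (\<Sum>d\<in>{1..n}. mu d * TT (n div d))"
  proof (rule sum_mono)
    fix d assume d: "d \<in> {1..n}"
    then have dpos: "d > 0" by simp
    define x where "x = real n / real d"
    have A: "\<bar>TT (n div d) - x^2 / 2\<bar> \<le> x / 2" using TT_approx[OF dpos, of n] by (simp add: x_def)
    have "\<bar>mu d * (TT (n div d) - x^2 / 2)\<bar> \<le> 1 * (x / 2)"
      unfolding abs_mult using abs_mu_le[of d] A by (intro mult_mono) auto
    then have "- (x / 2) \<le> mu d * (TT (n div d) - x^2 / 2)"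
      using abs_ge_minus_self[of "mu d * (TT (n div d) - x^2 / 2)"] by linarith
    then have "mu d * TT (n div d) \<ge> mu d * (x^2 / 2) - x / 2"
      unfolding right_diff_distrib by linarith
    moreover have "mu d * (x^2 / 2) = (real n)^2 / 2 * (mu d / (real d)^2)"
      by (simp add: x_def power_divide mult.commute)
    moreover have "x / 2 = real n / 2 * (1 / real d)" by (simp add: x_def)
    ultimately show "(real n)^2 / 2 * (mu d / (real d)^2) - real n / 2 * (1 / real d) \<le> mu d * TT (n div d)"
      by simp
  qed
  also have "\<dots> = real (Phi n)" using Phi_mu[OF assms] by simp
  finally show ?thesis
    by (simp add: SS_def HH_def sum_subtractf sum_distrib_left)
qed

lemma div_ge_half:
  fixes n d :: nat
  assumes "1 \<le> d" "d \<le> n"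
  shows "real (n div d) \<ge> real n / (2 * real d)" "n div d \<ge> 1"
proof -
  have dpos: "d > 0" using assms by simp
  show "n div d \<ge> 1" using assms by (simp add: div_greater_zero_iff Suc_le_eq)
  then have q1: "real (n div d) \<ge> 1" by simp
  have q2: "real (n div d) > real n / real d - 1" using div_real_bounds[OF dpos] by simp
  show "real (n div d) \<ge> real n / (2 * real d)"
  proof (cases "real n / real d \<ge> 2")
    case True
    have "real n / (2 * real d) = (real n / real d) / 2" by simp
    also have "\<dots> \<le> real n / real d - 1" using True by simp
    finally show ?thesis using q2 by simp
  next
    case False
    have "real n / (2 * real d) = (real n / real d) / 2" by simp
    also have "\<dots> \<le> 1" using False by simp
    finally show ?thesis using q1 by simp
  qed
qed

lemma one_le_S:
  assumes "n \<ge> 1"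
  shows "1 \<le> zeta2 * SS n + 2 / real n * HH n"
proof -
  have "1 = (\<Sum>d\<in>{1..n}. mu d / (real d)^2 * ZZ (n div d))" using one_mu_ZZ[OF assms] by simp
  also have "\<dots> \<le> (\<Sum>d\<in>{1..n}. zeta2 * (mu d / (real d)^2) + 2 / real n * (1 / real d))"
  proof (rule sum_mono)
    fix d assume d: "d \<in> {1..n}"
    define q where "q = n div d"
    have q: "q \<ge> 1" "real q \<ge> real n / (2 * real d)" using div_ge_half[of d n] d by (auto simp: q_def)
    define e where "e = zeta2 - ZZ q"
    have e0: "e \<ge> 0" using ZZ_le[of q] by (simp add: e_def)
    have e1: "e \<le> 1 / real q" using ZZ_tail[OF q(1)] by (simp add: e_def)
    have npos: "real n > 0" using assms by simp
    have "1 / real q \<le> 1 / (real n / (2 * real d))"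
      using q npos d by (intro divide_left_mono) auto
    also have "\<dots> = 2 * real d / real n" by simp
    finally have e2: "e \<le> 2 * real d / real n" using e1 by simp
    have "- (mu d * e) \<le> 1 * e"
      using abs_mu_le[of d] e0 by (metis abs_le_iff abs_mult_pos minus_mult_left mult_right_mono abs_ge_minus_self order_trans)
    then have "- (mu d * e) \<le> 2 * real d / real n" using e2 by simp
    then have "- (mu d * e) / (real d)^2 \<le> (2 * real d / real n) / (real d)^2"
      by (intro divide_right_mono) auto
    also have "(2 * real d / real n) / (real d)^2 = 2 / real n * (1 / real d)"
      using d by (simp add: power2_eq_square field_simps)
    finally have X: "- (mu d * e) / (real d)^2 \<le> 2 / real n * (1 / real d)" .
    have "mu d / (real d)^2 * ZZ (n div d) = zeta2 * (mu d / (real d)^2) + (- (mu d * e) / (real d)^2)"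
      using d by (simp add: e_def q_def field_simps)
    then show "mu d / (real d)^2 * ZZ (n div d) \<le> zeta2 * (mu d / (real d)^2) + 2 / real n * (1 / real d)"
      using X by simp
  qed
  also have "\<dots> = zeta2 * SS n + 2 / real n * HH n"
    by (simp add: SS_def HH_def sum.distrib sum_distrib_left)
  finally show ?thesis .
qed

lemma zeta2_ge: "zeta2 \<ge> 1"
proof -
  have "pi \<ge> 3" using pi_approx(1) by simp
  then have "pi^2 \<ge> 3^2" by (intro power_mono) auto
  then show ?thesis by (simp add: zeta2_def)
qed

lemma Phi_lower:
  assumes "n \<ge> 1"
  shows "real (Phi n) \<ge> (real n)^2 / (2 * zeta2) - 3 / 2 * real n * HH n"
proof -
  have z: "zeta2 \<ge> 1" by (rule zeta2_ge)
  have npos: "real n > 0" using assms by simp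
  have S: "SS n \<ge> (1 - 2 / real n * HH n) / zeta2"
    using one_le_S[OF assms] z by (simp add: field_simps)
  have "(real n)^2 / 2 * ((1 - 2 / real n * HH n) / zeta2) \<le> (real n)^2 / 2 * SS n"
    using S by (intro mult_left_mono) auto
  moreover have "(real n)^2 / 2 * ((1 - 2 / real n * HH n) / zeta2) = (real n)^2 / (2 * zeta2) - real n * HH n / zeta2"
    using npos z by (simp add: field_simps power2_eq_square)
  moreover have "real n * HH n / zeta2 \<le> real n * HH n / 1"
    using z HH_nonneg[of n] npos by (intro divide_left_mono) auto
  ultimately show ?thesis using Phi_ge_S[OF assms] by linarith
qed



lemma HH_harm: "HH n = harm n"
  by (simp add: HH_def harm_def inverse_eq_divide)

lemma HH_le: "n \<ge> 1 \<Longrightarrow> HH n \<le> 1 + ln (real n + 1)"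
proof -
  assume n: "n \<ge> 1"
  then obtain m where m: "n = Suc m" by (cases n) auto
  have "harm (Suc m) - ln (real (m + 2)) + 1 / real (2 * (m + 2)) \<le> (euler_mascheroni :: real)"
    by (rule euler_mascheroni_lower)
  moreover have "(euler_mascheroni :: real) < 13/22" by (rule euler_mascheroni_less_13_over_22)
  moreover have "1 / real (2 * (m + 2)) \<ge> 0" by (simp only: zero_le_divide_1_iff of_nat_0_le_iff)
  ultimately have "harm (Suc m) \<le> 1 + ln (real (m + 2))" by linarith
  moreover have "real (m + 2) = real n + 1" using m by simp
  ultimately show ?thesis using m by (simp add: HH_harm)
qed

lemma pi_sq_lt: "pi^2 < 10"
proof -
  have "pi \<le> 3.1416" using pi_approx(2) by simp
  then have "pi * pi \<le> 3.1416 * 3.1416" by (intro mult_mono) (auto intro: pi_ge_zero)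
  then show ?thesis by (simp add: power2_eq_square)
qed

lemma Phi_eventually:
  "\<forall>\<^sub>F n in sequentially. real (Phi n) \<ge> 3 / 10 * (real n)^2"
proof -
  define c where "c = 3 / pi^2 - 3 / 10"
  have pipos: "pi^2 > 0" by simp
  have "3 / 10 < 3 / pi^2" using pi_sq_lt pipos by (simp add: field_simps)
  then have c: "c > 0" by (simp add: c_def)
  have lim: "filterlim (\<lambda>n. real n / (1 + ln (real n + 1))) at_top sequentially"
    by real_asymp
  have ev: "\<forall>\<^sub>F n in sequentially. 3 / (2 * c) \<le> real n / (1 + ln (real n + 1))"
    using lim by (simp add: filterlim_at_top)
  show ?thesis
    using ev eventually_ge_at_top[of "1::nat"]
  proof eventually_elim
    case (elim n)
    have n: "n \<ge> 1" using elim by simp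
    have lpos: "1 + ln (real n + 1) > 0" using n by (smt (verit) ln_ge_zero of_nat_0_le_iff)
    have "3 / (2 * c) * (1 + ln (real n + 1)) \<le> real n"
      using elim(1) lpos by (simp add: le_divide_eq)
    then have A: "3 / 2 * (1 + ln (real n + 1)) \<le> c * real n"
      using c by (simp add: field_simps)
    have H: "HH n \<le> 1 + ln (real n + 1)" using HH_le[OF n] .
    have "3 / 2 * real n * HH n \<le> 3 / 2 * real n * (1 + ln (real n + 1))"
      using H by (intro mult_left_mono) auto
    also have "\<dots> \<le> real n * (c * real n)" using A
      by (metis mult.commute mult.left_commute mult_left_mono of_nat_0_le_iff)
    finally have B: "3 / 2 * real n * HH n \<le> c * (real n)^2" by (simp add: power2_eq_square mult_ac)
    have "(real n)^2 / (2 * zeta2) = 3 / pi^2 * (real n)^2" by (simp add: zeta2_def)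
    then have "real (Phi n) \<ge> 3 / pi^2 * (real n)^2 - c * (real n)^2"
      using Phi_lower[OF n] B by linarith
    then show ?case by (simp add: c_def algebra_simps)
  qed
qed



lemma quotient_of_frac:
  assumes "b > 0" "coprime a b"
  shows "quotient_of (of_int a / of_int b :: rat) = (a, b)"
  using assms by (simp add: Fract_of_int_quotient[symmetric] quotient_of_Fract)

definition Iset :: "nat \<Rightarrow> rat set" where
  "Iset n = {x :: rat. 0 < x \<and> x \<le> 1 \<and> nat (snd (quotient_of x)) \<le> n}"

lemma sigma_I_Phi: "sigma_I n = Phi n"
proof -
  define K where "K = Sigma {1..n} (\<lambda>m. totatives m)"
  define h where "h = (\<lambda>x::rat. (nat (snd (quotient_of x)), nat (fst (quotient_of x))))"
  define g where "g = (\<lambda>(m::nat, k::nat). (of_nat k / of_nat m :: rat))"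
  have "bij_betw h (Iset n) K"
  proof (rule bij_betw_byWitness[where f' = g])
    show "\<forall>a\<in>Iset n. g (h a) = a"
    proof
      fix x assume x: "x \<in> Iset n"
      obtain a b where ab: "quotient_of x = (a, b)" by (cases "quotient_of x")
      have b: "b > 0" using quotient_of_denom_pos[OF ab] .
      have xe: "x = of_int a / of_int b" using quotient_of_div[OF ab] .
      have "a > 0" using x b xe by (auto simp: Iset_def zero_less_divide_iff)
      then show "g (h x) = x" using b xe ab by (simp add: g_def h_def)
    qed
    show "\<forall>a'\<in>K. h (g a') = a'"
    proof
      fix y assume "y \<in> K"
      then obtain m k where y: "y = (m, k)" "1 \<le> m" "m \<le> n" "k \<in> totatives m" by (auto simp: K_def)
      have c: "coprime (int k) (int m)" using y by (simp add: totatives_def coprime_int_iff)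
      have "quotient_of (of_int (int k) / of_int (int m) :: rat) = (int k, int m)"
        using y c by (intro quotient_of_frac) auto
      then show "h (g y) = y" using y by (simp add: g_def h_def)
    qed
    show "h ` Iset n \<subseteq> K"
    proof
      fix z assume "z \<in> h ` Iset n"
      then obtain x where x: "x \<in> Iset n" "z = h x" by auto
      obtain a b where ab: "quotient_of x = (a, b)" by (cases "quotient_of x")
      have b: "b > 0" using quotient_of_denom_pos[OF ab] .
      have xe: "x = of_int a / of_int b" using quotient_of_div[OF ab] .
      have cop: "coprime a b" using quotient_of_coprime[OF ab] .
      have a: "a > 0" using x b xe by (auto simp: Iset_def zero_less_divide_iff)
      have "of_int a / of_int b \<le> (1::rat)" using x xe by (simp add: Iset_def)
      then have ab_le: "a \<le> b" using b by (simp add: divide_le_eq_1)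
      have bn: "nat b \<le> n" using x ab by (simp add: Iset_def)
      have "coprime (nat a) (nat b)" using cop a b
        by (metis coprime_int_iff int_nat_eq less_le_not_le)
      then show "z \<in> K" using x(2) ab a b ab_le bn
        by (auto simp: K_def h_def totatives_def)
    qed
    show "g ` K \<subseteq> Iset n"
    proof
      fix z assume "z \<in> g ` K"
      then obtain m k where y: "z = g (m, k)" "1 \<le> m" "m \<le> n" "k \<in> totatives m" by (auto simp: K_def)
      have c: "coprime (int k) (int m)" using y by (simp add: totatives_def coprime_int_iff)
      have q: "quotient_of (of_int (int k) / of_int (int m) :: rat) = (int k, int m)"
        using y c by (intro quotient_of_frac) auto
      have k: "0 < k" "k \<le> m" using y by (auto simp: totatives_def)
      then show "z \<in> Iset n" using y q by (simp add: Iset_def g_def divide_le_eq_1)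
    qed
  qed
  then have "card (Iset n) = card K" by (rule bij_betw_same_card)
  also have "card K = (\<Sum>m\<in>{1..n}. card (totatives m))"
    unfolding K_def by (rule card_SigmaI) auto
  also have "\<dots> = Phi n" by (simp add: Phi_def totient_def)
  finally show ?thesis by (simp add: sigma_I_def Iset_def)
qed



lemma comp_pos_eq:
  "comp_pos x = max (ell (nat (\<lceil>x\<rceil> - 1))) (nat (snd (quotient_of (x - of_int (\<lceil>x\<rceil> - 1)))))"
  by (simp add: comp_pos_def triple_of_def Let_def split: prod.split)

lemma ell_ge1: "ell k \<ge> 1" by (simp add: ell_def)

lemma comp_pos_ge1: "comp_pos x \<ge> 1"
  unfolding comp_pos_eq using ell_ge1 le_max_iff_disj by blast

lemma comp_Q_ge1: "comp_Q x \<ge> 1"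
  unfolding comp_Q_def using comp_pos_ge1[of "\<bar>x\<bar>"] by simp

definition Pset :: "nat \<Rightarrow> rat set" where
  "Pset n = {x :: rat. 0 < x \<and> comp_pos x \<le> n}"

lemma ceiling_frac:
  assumes "0 < y" "y \<le> (1::rat)"
  shows "\<lceil>of_nat p + y\<rceil> = int p + 1"
  using assms by (simp add: ceiling_eq_iff)

lemma finite_Iset: "finite (Iset n)"
proof -
  have "Iset n \<subseteq> (\<lambda>(m::nat, k::nat). (of_nat k / of_nat m :: rat)) ` ({0..n} \<times> {0..n})"
  proof
    fix x assume x: "x \<in> Iset n"
    obtain a b where ab: "quotient_of x = (a, b)" by (cases "quotient_of x")
    have b: "b > 0" using quotient_of_denom_pos[OF ab] .
    have xe: "x = of_int a / of_int b" using quotient_of_div[OF ab] .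
    have a: "a > 0" using x b xe by (auto simp: Iset_def zero_less_divide_iff)
    have "of_int a / of_int b \<le> (1::rat)" using x xe by (simp add: Iset_def)
    then have ab_le: "a \<le> b" using b by (simp add: divide_le_eq_1)
    have bn: "nat b \<le> n" using x ab by (simp add: Iset_def)
    have "x = of_nat (nat a) / of_nat (nat b)" using xe a b by simp
    moreover have "(nat b, nat a) \<in> {0..n} \<times> {0..n}" using bn ab_le a by auto
    ultimately show "x \<in> (\<lambda>(m::nat, k::nat). (of_nat k / of_nat m :: rat)) ` ({0..n} \<times> {0..n})"
      by (metis (no_types, lifting) case_prod_conv image_eqI)
  qed
  then show ?thesis by (rule finite_subset) auto
qed

lemma Pset_bij:
  assumes n: "n \<ge> 1"
  shows "bij_betw (\<lambda>x::rat. (nat (\<lceil>x\<rceil> - 1), x - of_int (\<lceil>x\<rceil> - 1))) (Pset n) ({0..n} \<times> Iset n)"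
proof -
  define f where "f = (\<lambda>x::rat. (nat (\<lceil>x\<rceil> - 1), x - of_int (\<lceil>x\<rceil> - 1)))"
  define g where "g = (\<lambda>(p::nat, y::rat). of_nat p + y)"
  have "bij_betw f (Pset n) ({0..n} \<times> Iset n)"
  proof (rule bij_betw_byWitness[where f' = g])
    show "\<forall>a\<in>Pset n. g (f a) = a"
    proof
      fix x assume x: "x \<in> Pset n"
      have "\<lceil>x\<rceil> - 1 \<ge> 0" using x by (simp add: Pset_def)
      then show "g (f x) = x" by (simp add: f_def g_def)
    qed
    show "\<forall>a'\<in>{0..n} \<times> Iset n. f (g a') = a'"
    proof
      fix z assume "z \<in> {0..n} \<times> Iset n"
      then obtain p y where z: "z = (p, y)" "p \<le> n" "0 < y" "y \<le> 1" by (auto simp: Iset_def)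
      have "\<lceil>of_nat p + y\<rceil> = int p + 1" using z by (intro ceiling_frac) auto
      then show "f (g z) = z" using z by (simp add: f_def g_def)
    qed
    show "f ` Pset n \<subseteq> {0..n} \<times> Iset n"
    proof
      fix z assume "z \<in> f ` Pset n"
      then obtain x where x: "x \<in> Pset n" "z = f x" by auto
      define p where "p = \<lceil>x\<rceil> - 1"
      have p0: "p \<ge> 0" using x by (simp add: Pset_def p_def)
      have y: "0 < x - of_int p" "x - of_int p \<le> 1"
        by (simp_all add: p_def) linarith+
      have c: "max (ell (nat p)) (nat (snd (quotient_of (x - of_int p)))) \<le> n"
        using x by (simp add: Pset_def comp_pos_eq p_def)
      then have "ell (nat p) \<le> n" by simp
      then have "nat p \<le> n" by (simp add: ell_def split: if_splits)
      moreover have "z = (nat p, x - of_int p)" using x by (simp add: f_def p_def)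
      ultimately show "z \<in> {0..n} \<times> Iset n" using y c
        by (simp add: Iset_def)
    qed
    show "g ` ({0..n} \<times> Iset n) \<subseteq> Pset n"
    proof
      fix z assume "z \<in> g ` ({0..n} \<times> Iset n)"
      then obtain p y where z: "z = of_nat p + y" "p \<le> n" "y \<in> Iset n" by (auto simp: g_def)
      have y: "0 < y" "y \<le> 1" "nat (snd (quotient_of y)) \<le> n" using z by (auto simp: Iset_def)
      have ce: "\<lceil>z\<rceil> - 1 = int p" using ceiling_frac[OF y(1,2), of p] z by simp
      have "ell p \<le> n" using z n by (simp add: ell_def)
      then have "comp_pos z \<le> n" using y ce z by (simp add: comp_pos_eq)
      moreover have "z > 0" using z y by (simp add: add_nonneg_pos)
      ultimately show "z \<in> Pset n" by (simp add: Pset_def)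
    qed
  qed
  then show ?thesis by (simp add: f_def)
qed

lemma card_Pset:
  assumes n: "n \<ge> 1"
  shows "card (Pset n) = (n + 1) * sigma_I n" "finite (Pset n)"
proof -
  have "card (Pset n) = card ({0..n} \<times> Iset n)" using Pset_bij[OF n] by (rule bij_betw_same_card)
  also have "\<dots> = (n + 1) * card (Iset n)" by (simp add: card_cartesian_product)
  finally show "card (Pset n) = (n + 1) * sigma_I n" by (simp add: sigma_I_def Iset_def)
  have "finite ({0..n} \<times> Iset n)" using finite_Iset by simp
  then show "finite (Pset n)" using Pset_bij[OF n] by (simp add: bij_betw_finite)
qed

lemma sigma_Q_eq:
  assumes n: "n \<ge> 1"
  shows "sigma_Q n = 2 * sigma_I n * (n + 1) + 1"
proof -
  have eq: "{x :: rat. 1 \<le> comp_Q x \<and> comp_Q x \<le> n} = insert 0 (Pset n \<union> uminus ` Pset n)"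
  proof (rule set_eqI)
    fix x :: rat
    show "x \<in> {x. 1 \<le> comp_Q x \<and> comp_Q x \<le> n} \<longleftrightarrow> x \<in> insert 0 (Pset n \<union> uminus ` Pset n)"
    proof (cases "x = 0")
      case True then show ?thesis using n by (simp add: comp_Q_def)
    next
      case False
      show ?thesis
      proof (cases "x > 0")
        case True then show ?thesis using comp_Q_ge1[of x] by (auto simp: comp_Q_def Pset_def)
      next
        case neg: False
        then have x: "x < 0" using False by simp
        have "x \<in> uminus ` Pset n \<longleftrightarrow> -x \<in> Pset n" by (metis image_iff minus_minus)
        then show ?thesis using comp_Q_ge1[of x] x by (auto simp: comp_Q_def Pset_def)
      qed
    qed
  qed
  have fin: "finite (Pset n)" using card_Pset(2)[OF n] .
  have disj: "Pset n \<inter> uminus ` Pset n = {}" by (auto simp: Pset_def)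
  have z: "0 \<notin> Pset n \<union> uminus ` Pset n" by (auto simp: Pset_def)
  have "card (insert 0 (Pset n \<union> uminus ` Pset n)) = Suc (card (Pset n) + card (uminus ` Pset n))"
    using fin disj z by (simp add: card_Un_disjoint)
  also have "card (uminus ` Pset n) = card (Pset n)" by (simp add: card_image)
  finally show ?thesis unfolding sigma_Q_def eq using card_Pset(1)[OF n] by simp
qed



lemma Phi_Suc: "Phi (Suc n) = Phi n + totient (Suc n)"
  by (simp add: Phi_def)

lemma Phi_upper:
  assumes "n \<ge> 6"
  shows "2 * Phi n + 2 \<le> n * (n - 1)"
  using assms
proof (induction n rule: dec_induct)
  case base
  have "Phi 6 = 12" by code_simp
  then show ?case by simp
next
  case (step n)
  have "totient (Suc n) < Suc n" using step by (intro totient_less) auto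
  then have "2 * Phi (Suc n) + 2 \<le> n * (n - 1) + 2 * n" using step.IH by (simp add: Phi_Suc)
  also have "n * (n - 1) + 2 * n = Suc n * (Suc n - 1)" using step
    by (cases n) (auto simp: algebra_simps)
  finally show ?case .
qed

theorem theorem12:
  shows "(\<forall>n\<ge>1. sigma_Q n = 2 * sigma_I n * (n + 1) + 1)
    \<and> (\<forall>n\<ge>1. sigma_Q n = 2 * (n + 1) * Phi n + 1)
    \<and> F_approx (\<lambda>n. real (sigma_Q n)) (\<lambda>n. real n ^ 3)
    \<and> F_less (\<lambda>n. 3/5 * (real n ^ 3 + real n ^ 2)) (\<lambda>n. real (sigma_Q n))
    \<and> F_less (\<lambda>n. real (sigma_Q n)) (\<lambda>n. real n ^ 3 - real n)"
proof -
  have A: "\<forall>n\<ge>1. sigma_Q n = 2 * sigma_I n * (n + 1) + 1" using sigma_Q_eq by blast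
  have B: "\<forall>n\<ge>1. sigma_Q n = 2 * (n + 1) * Phi n + 1" using sigma_Q_eq sigma_I_Phi by simp
  have up: "\<forall>\<^sub>F n in sequentially. real (sigma_Q n) < real n ^ 3 - real n"
    using eventually_ge_at_top[of "6::nat"]
  proof eventually_elim
    case (elim n)
    have P: "2 * Phi n + 2 \<le> n * (n - 1)" using Phi_upper[OF elim] .
    have "real (2 * Phi n + 2) \<le> real (n * (n - 1))" using P by linarith
    then have P': "2 * real (Phi n) + 2 \<le> real n * (real n - 1)" using elim by (simp add: of_nat_diff)
    have n1: "real n + 1 > 0" by simp
    have "real (sigma_Q n) = (real n + 1) * (2 * real (Phi n)) + 1" using B elim by (simp add: algebra_simps)
    also have "\<dots> \<le> (real n + 1) * (real n * (real n - 1) - 2) + 1"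
      using P' n1 by (intro add_right_mono mult_left_mono) auto
    also have "\<dots> < real n ^ 3 - real n"
      using elim by (simp add: algebra_simps power3_eq_cube)
    finally show ?case .
  qed
  have lo: "\<forall>\<^sub>F n in sequentially. 3/5 * (real n ^ 3 + real n ^ 2) < real (sigma_Q n)"
    using Phi_eventually eventually_ge_at_top[of "1::nat"]
  proof eventually_elim
    case (elim n)
    have n1: "real n + 1 > 0" by simp
    have "3/5 * (real n ^ 3 + real n ^ 2) = (real n + 1) * (2 * (3 / 10 * (real n)^2))"
      by (simp add: algebra_simps power3_eq_cube power2_eq_square)
    also have "\<dots> \<le> (real n + 1) * (2 * real (Phi n))"
      using elim(1) n1 by (intro mult_left_mono) auto
    also have "\<dots> < (real n + 1) * (2 * real (Phi n)) + 1" by simp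
    also have "\<dots> = real (sigma_Q n)" using B elim by (simp add: algebra_simps)
    finally show ?case .
  qed
  have ap: "F_approx (\<lambda>n. real (sigma_Q n)) (\<lambda>n. real n ^ 3)"
    unfolding F_approx_def
  proof (intro conjI)
    have "\<forall>\<^sub>F n in sequentially. real 2 * real (sigma_Q n) \<ge> real n ^ 3"
      using lo
    proof eventually_elim
      case (elim n)
      have nn: "real n ^ 3 \<ge> 0" "real n ^ 2 \<ge> 0" by auto
      have dd: "3/5 * (real n ^ 3 + real n ^ 2) = 3/5 * real n ^ 3 + 3/5 * real n ^ 2" by (simp add: distrib_left)
      have "real n ^ 3 \<le> 2 * real (sigma_Q n)" using elim nn dd by linarith
      then show ?case by simp
    qed
    then show "\<exists>k::nat. k \<ge> 1 \<and> (\<forall>\<^sub>F n in sequentially. real k * real (sigma_Q n) \<ge> real n ^ 3)"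
      by (intro exI[of _ 2]) simp
    have "\<forall>\<^sub>F n in sequentially. real 1 * real n ^ 3 \<ge> real (sigma_Q n)"
      using up
    proof eventually_elim
      case (elim n)
      have "real n \<ge> 0" by simp
      then have "real (sigma_Q n) \<le> real n ^ 3" using elim by linarith
      then show ?case by (simp only: of_nat_1 mult_1)
    qed
    then show "\<exists>k::nat. k \<ge> 1 \<and> (\<forall>\<^sub>F n in sequentially. real k * real n ^ 3 \<ge> real (sigma_Q n))"
      by (intro exI[of _ 1]) simp
  qed
  show ?thesis using A B ap lo up by (simp add: F_less_def)
qed


end
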